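(* Let $\lambda$ be a partition whose 2-quotient $(\mu,\nu)$ is non-empty (i.e. $|\mu|+|\nu|>0$). Then the subleading coefficient $r_{\lambda,1}$ of $R_\lambda$ satisfies $r_{\lambda,1}=-c(\lambda)$, where $c(\lambda)=\sum_{(i,j)\in\lambda}(j-i)$ is the sum of the contents of the boxes of the Young diagram of $\lambda$.
   Context: Partitions $\lambda=(\lambda_1\ge\dots\ge\lambda_{\ell(\lambda)}>0)$; Young diagram $\{(i,j):1\le i\le\ell(\lambda),1\le j\le\lambda_i\}$; degree vector $n_i=\lambda_i+\ell(\lambda)-i$, $\Delta(n_\lambda)=\prod_{i<j}(n_j-n_i)$. Hermite: $\mathrm{He}_0=1,\mathrm{He}_1=x,\mathrm{He}_n=x\mathrm{He}_{n-1}-(n-1)\mathrm{He}_{n-2}$; $\mathrm{He}_\lambda=\mathrm{Wr}[\mathrm{He}_{n_1},\dots,\mathrm{He}_{n_{\ell(\lambda)}}]/\Delta(n_\lambda)$. The 2-core $\bar\lambda$ of $\lambda$ is obtained by repeatedly removing dominoes ($1\times2$ or $2\times1$ rectangles) from the Young diagram, keeping a Young diagram each time, as long as possible; the 2-quotient $(\mu,\nu)$ is a pair of partitions with $|\mu|+|\nu|=(|\lambda|-|\bar\lambda|)/2$ (the number of dominoes removed). There is a monic polynomial $R_\lambda$ of degree $|\mu|+|\nu|$ with $\mathrm{He}_\lambda(x)=x^{|\bar\lambda|}R_\lambda(x^2)$; write $R_\lambda(x)=\sum_{j=0}^{|\mu|+|\nu|}r_{\lambda,j}x^{|\mu|+|\nu|-j}$.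 *)

theory Defs
  imports "HOL-Computational_Algebra.Polynomial" "HOL-Combinatorics.Permutations"
begin

definition is_partition :: "nat list \<Rightarrow> bool" where
  "is_partition lam \<longleftrightarrow> sorted_wrt (\<ge>) lam \<and> (\<forall>x\<in>set lam. 0 < x)"

definition young_diagram :: "nat list \<Rightarrow> (nat \<times> nat) set" where
  "young_diagram lam = {(i, j). 1 \<le> i \<and> i \<le> length lam \<and> 1 \<le> j \<and> j \<le> lam ! (i - 1)}"

definition is_domino :: "(nat \<times> nat) set \<Rightarrow> bool" where
  "is_domino D \<longleftrightarrow> (\<exists>i j. D = {(i, j), (i, Suc j)} \<or> D = {(i, j), (Suc i, j)})"

definition domino_removal :: "nat list \<Rightarrow> nat list \<Rightarrow> bool" where
  "domino_removal lam mu \<longleftrightarrow> is_partition mu \<and> young_diagram mu \<subseteq> young_diagram lam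
     \<and> is_domino (young_diagram lam - young_diagram mu)"

text \<open>The 2-core: result of removing dominoes as long as possible (unique).\<close>
definition two_core :: "nat list \<Rightarrow> nat list" where
  "two_core lam = (THE kap. domino_removal\<^sup>*\<^sup>* lam kap \<and> \<not> (\<exists>nu. domino_removal kap nu))"

text \<open>|mu| + |nu| for the 2-quotient (mu,nu): the number of dominoes removed.\<close>
definition quot_size :: "nat list \<Rightarrow> nat" where
  "quot_size lam = (sum_list lam - sum_list (two_core lam)) div 2"

fun hermite :: "nat \<Rightarrow> real poly" where
  "hermite 0 = 1"
| "hermite (Suc 0) = [:0, 1:]"
| "hermite (Suc (Suc n)) = [:0, 1:] * hermite (Suc n) - smult (real (Suc n)) (hermite n)"

definition wronskian :: "real poly list \<Rightarrow> real poly" where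
  "wronskian fs = (\<Sum>p | p permutes {..<length fs}.
      of_int (sign p) * (\<Prod>i<length fs. (pderiv ^^ i) (fs ! p i)))"

text \<open>Degree vector n_i = lam_i + l - i (stated 0-based: index i stands for i+1).\<close>
definition degvec :: "nat list \<Rightarrow> nat list" where
  "degvec lam = map (\<lambda>i. lam ! i + length lam - Suc i) [0..<length lam]"

definition vandermonde_deg :: "nat list \<Rightarrow> int" where
  "vandermonde_deg lam = (let n = degvec lam; l = length lam in
     \<Prod>j<l. \<Prod>i<j. (int (n ! j) - int (n ! i)))"

definition hermite_partition :: "nat list \<Rightarrow> real poly" where
  "hermite_partition lam =
     smult (1 / of_int (vandermonde_deg lam)) (wronskian (map hermite (degvec lam)))"

definition R_poly :: "nat list \<Rightarrow> real poly" where
  "R_poly lam = (THE R. hermite_partition lam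
       = monom 1 (sum_list (two_core lam)) * pcompose R [:0, 0, 1:])"

definition content_sum :: "nat list \<Rightarrow> int" where
  "content_sum lam = (\<Sum>(i, j)\<in>young_diagram lam. int j - int i)"

end

theory Submission
  imports Defs "Jordan_Normal_Form.Determinant"
begin


lemma yd_Cons: "young_diagram (x # xs) =
   {(1, j) | j. 1 \<le> j \<and> j \<le> x} \<union> (\<lambda>(i, j). (Suc i, j)) ` young_diagram xs"
proof (intro equalityI subsetI)
  fix c assume "c \<in> young_diagram (x # xs)"
  then obtain i j where c: "c = (i, j)" "1 \<le> i" "i \<le> Suc (length xs)" "1 \<le> j" "j \<le> (x#xs) ! (i - 1)"
    by (auto simp: young_diagram_def)
  show "c \<in> {(1, j) | j. 1 \<le> j \<and> j \<le> x} \<union> (\<lambda>(i, j). (Suc i, j)) ` young_diagram xs"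
  proof (cases i)
    case 0 then show ?thesis using c by auto
  next
    case (Suc i')
    show ?thesis
    proof (cases i')
      case 0 then show ?thesis using c Suc by auto
    next
      case (Suc i'')
      then have "(i', j) \<in> young_diagram xs" using c \<open>i = Suc i'\<close> by (auto simp: young_diagram_def)
      then show ?thesis using c \<open>i = Suc i'\<close> by force
    qed
  qed
next
  fix c assume "c \<in> {(1, j) | j. 1 \<le> j \<and> j \<le> x} \<union> (\<lambda>(i, j). (Suc i, j)) ` young_diagram xs"
  then show "c \<in> young_diagram (x # xs)"
    by (auto simp: young_diagram_def nth_Cons split: nat.splits)
qed

lemma yd_Nil[simp]: "young_diagram [] = {}"
  by (auto simp: young_diagram_def)

lemma finite_yd[simp]: "finite (young_diagram lam)"
  by (induction lam) (auto simp: yd_Cons)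

lemma card_yd: "card (young_diagram lam) = sum_list lam"
proof (induction lam)
  case Nil then show ?case by simp
next
  case (Cons x xs)
  have e: "{(1::nat, j) | j. 1 \<le> j \<and> j \<le> x} = (\<lambda>j. (1, j)) ` {1..x}" by auto
  have d: "{(1::nat, j) | j. 1 \<le> j \<and> j \<le> x} \<inter> (\<lambda>(i, j). (Suc i, j)) ` young_diagram xs = {}"
    by (auto simp: young_diagram_def)
  have i: "inj_on (\<lambda>(i, j). (Suc i, j)) (young_diagram xs)" by (auto simp: inj_on_def)
  have "card (young_diagram (x # xs)) = card {(1::nat, j) | j. 1 \<le> j \<and> j \<le> x}
     + card ((\<lambda>(i, j). (Suc i, j)) ` young_diagram xs)"
    unfolding yd_Cons by (rule card_Un_disjoint) (use d e in auto)
  also have "card {(1::nat, j) | j. 1 \<le> j \<and> j \<le> x} = x" unfolding e by (simp add: card_image inj_on_def)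
  also have "card ((\<lambda>(i, j). (Suc i, j)) ` young_diagram xs) = sum_list xs" using Cons i by (simp add: card_image)
  finally show ?case by simp
qed

definition cpar :: "nat \<times> nat \<Rightarrow> int" where
  "cpar c = (if even (fst c + snd c) then 1 else -1)"

definition Dv :: "nat list \<Rightarrow> int" where
  "Dv lam = (\<Sum>c\<in>young_diagram lam. cpar c)"

lemma sum_cpar_row: "(\<Sum>j\<in>{1..x}. cpar (1, j)) = (if odd x then 1 else 0)"
  by (induction x) (auto simp: cpar_def)

lemma Dv_Cons: "Dv (x # xs) = (if odd x then 1 else 0) - Dv xs"
proof -
  have e: "{(1::nat, j) | j. 1 \<le> j \<and> j \<le> x} = (\<lambda>j. (1, j)) ` {1..x}" by auto
  have d: "{(1::nat, j) | j. 1 \<le> j \<and> j \<le> x} \<inter> (\<lambda>(i, j). (Suc i, j)) ` young_diagram xs = {}"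
    by (auto simp: young_diagram_def)
  have i: "inj_on (\<lambda>(i, j). (Suc i, j)) (young_diagram xs)" by (auto simp: inj_on_def)
  have "Dv (x # xs) = (\<Sum>c\<in>{(1::nat, j) | j. 1 \<le> j \<and> j \<le> x}. cpar c)
     + (\<Sum>c\<in>(\<lambda>(i, j). (Suc i, j)) ` young_diagram xs. cpar c)"
    unfolding Dv_def yd_Cons by (rule sum.union_disjoint) (use d e in auto)
  also have "(\<Sum>c\<in>{(1::nat, j) | j. 1 \<le> j \<and> j \<le> x}. cpar c) = (\<Sum>j\<in>{1..x}. cpar (1, j))"
    unfolding e by (subst sum.reindex) (auto simp: inj_on_def)
  also have "(\<Sum>c\<in>(\<lambda>(i, j). (Suc i, j)) ` young_diagram xs. cpar c) = - Dv xs"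
    unfolding Dv_def by (subst sum.reindex[OF i]) (auto simp: cpar_def sum_negf[symmetric] intro!: sum.cong)
  finally show ?thesis using sum_cpar_row[of x] by simp
qed

lemma degvec_Cons: "degvec (x # xs) = (x + length xs) # degvec xs"
proof -
  have "[0..<Suc (length xs)] = 0 # map Suc [0..<length xs]" by (simp add: map_Suc_upt upt_conv_Cons del: upt_Suc)
  then show ?thesis by (simp add: degvec_def)
qed

lemma length_degvec[simp]: "length (degvec lam) = length lam"
  by (simp add: degvec_def)

definition sdv :: "nat list \<Rightarrow> int" where
  "sdv lam = int (length (filter odd (degvec lam))) - int (length (filter even (degvec lam)))"

definition hh :: "int \<Rightarrow> int" where
  "hh s = (if odd s then (s + 1) div 2 else - (s div 2))"

lemma sdv_parity: "even (sdv lam + int (length lam))"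
proof -
  have "length (filter odd (degvec lam)) + length (filter even (degvec lam)) = length lam"
    using sum_length_filter_compl[of odd "degvec lam"] by (simp add: comp_def)
  then show ?thesis unfolding sdv_def by presburger
qed

lemma sdv_Cons: "sdv (x # xs) = sdv xs + (if odd (x + length xs) then 1 else -1)"
  by (auto simp: sdv_def degvec_Cons)

lemma Dv_hh: "Dv lam = hh (sdv lam)"
proof (induction lam)
  case Nil then show ?case by (simp add: Dv_def sdv_def hh_def degvec_def)
next
  case (Cons x xs)
  have p: "even (sdv xs + int (length xs))" by (rule sdv_parity)
  show ?case unfolding Dv_Cons sdv_Cons Cons.IH hh_def
    using p by (cases "even x"; cases "even (length xs)") (auto, presburger+)
qed


lemma domino_inv:
  assumes "domino_removal lam mu"
  shows "Dv mu = Dv lam" "sum_list lam = sum_list mu + 2" "is_partition mu"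
proof -
  from assms have sub: "young_diagram mu \<subseteq> young_diagram lam"
    and dom: "is_domino (young_diagram lam - young_diagram mu)" and p: "is_partition mu"
    unfolding domino_removal_def by auto
  obtain i j where D: "young_diagram lam - young_diagram mu = {(i,j),(i,Suc j)} \<or>
      young_diagram lam - young_diagram mu = {(i,j),(Suc i,j)}"
    using dom unfolding is_domino_def by blast
  have s0: "(\<Sum>c\<in>young_diagram lam - young_diagram mu. cpar c) = 0"
    using D by (auto simp: cpar_def)
  have c2: "card (young_diagram lam - young_diagram mu) = 2" using D by auto
  have "Dv lam = (\<Sum>c\<in>young_diagram lam - young_diagram mu. cpar c) + Dv mu"
    unfolding Dv_def by (rule sum.subset_diff[OF sub finite_yd])
  then show "Dv mu = Dv lam" using s0 by simp
  have "card (young_diagram lam - young_diagram mu) = card (young_diagram lam) - card (young_diagram mu)"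
    by (rule card_Diff_subset[OF finite_yd sub])
  moreover have "card (young_diagram mu) \<le> card (young_diagram lam)" by (rule card_mono[OF finite_yd sub])
  ultimately show "sum_list lam = sum_list mu + 2" using c2 by (simp add: card_yd)
  show "is_partition mu" by (rule p)
qed

lemma reach_inv:
  assumes "domino_removal\<^sup>*\<^sup>* lam kap" "is_partition lam"
  shows "is_partition kap \<and> Dv kap = Dv lam \<and> sum_list kap \<le> sum_list lam
     \<and> even (sum_list lam - sum_list kap)"
  using assms(1)
proof (induction rule: rtranclp_induct)
  case base then show ?case using assms(2) by simp
next
  case (step y z)
  then show ?case using domino_inv[OF step(2)] by auto
qed

definition stair :: "nat \<Rightarrow> nat list" where
  "stair k = map (\<lambda>i. k - i) [0..<k]"

lemma stair_Suc: "stair (Suc k) = Suc k # stair k"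
proof -
  have "[0..<Suc k] = 0 # map Suc [0..<k]" by (simp add: map_Suc_upt upt_conv_Cons del: upt_Suc)
  then show ?thesis by (simp add: stair_def)
qed

lemma stair_0[simp]: "stair 0 = []" by (simp add: stair_def)

lemma length_stair[simp]: "length (stair k) = k" by (simp add: stair_def)

lemma sdv_stair: "sdv (stair k) = int k"
  by (induction k) (auto simp: stair_Suc sdv_Cons, simp add: sdv_def degvec_def)

lemma sum_stair: "2 * sum_list (stair k) = k * (k + 1)"
  by (induction k) (auto simp: stair_Suc)

lemma Dv_stair: "Dv (stair k) = hh (int k)"
  by (simp add: Dv_hh sdv_stair)

lemma hh_inj: "hh (int a) = hh (int b) \<Longrightarrow> a = b"
  unfolding hh_def by (auto split: if_splits) presburger+

definition tk :: "int \<Rightarrow> int" where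
  "tk s = (if s \<ge> 0 then s else - s - 1)"

lemma hh_tk: "hh (tk s) = hh s"
  unfolding hh_def tk_def by (auto split: if_splits)

lemma tk_nonneg: "tk s \<ge> 0" unfolding tk_def by auto

lemma tk_sq: "tk s * (tk s + 1) = s * (s + 1)"
  unfolding tk_def by (auto simp: algebra_simps)


definition gx :: "nat list \<Rightarrow> nat \<Rightarrow> nat" where
  "gx xs i = (if i < length xs then xs ! i else 0)"

lemma yd_gx: "young_diagram xs = {(i,j). 1 \<le> i \<and> 1 \<le> j \<and> j \<le> gx xs (i - 1)}"
  by (auto simp: young_diagram_def gx_def split: if_splits)

lemma gx_Cons0[simp]: "gx (y # ys) 0 = y" by (simp add: gx_def)
lemma gx_ConsS[simp]: "gx (y # ys) (Suc i) = gx ys i" by (simp add: gx_def)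

lemma gx_filter: "sorted_wrt (\<ge>) ys \<Longrightarrow> gx (filter (\<lambda>x. 0 < x) ys) i = gx ys i"
proof (induction ys arbitrary: i)
  case Nil then show ?case by simp
next
  case (Cons y ys)
  show ?case
  proof (cases "0 < y")
    case True
    then show ?thesis using Cons by (cases i) auto
  next
    case False
    then have z: "\<forall>z\<in>set ys. z = 0" using Cons.prems by auto
    then have "filter (\<lambda>x. 0 < x) (y # ys) = []" using False by (auto simp: filter_empty_conv)
    moreover have "gx (y # ys) i = 0" using z False
      by (cases i) (auto simp: gx_def)
    ultimately show ?thesis by (simp add: gx_def)
  qed
qed

lemma part_filter: "sorted_wrt (\<ge>) ys \<Longrightarrow> is_partition (filter (\<lambda>x. 0 < x) ys)"
  unfolding is_partition_def by (auto simp: sorted_wrt_filter)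

lemma yd_filter: "sorted_wrt (\<ge>) ys \<Longrightarrow> young_diagram (filter (\<lambda>x. 0 < x) ys) = young_diagram ys"
  by (simp add: yd_gx gx_filter)

lemma yd_sub_diff:
  assumes "\<And>k. gx ys k \<le> gx xs k"
  shows "young_diagram ys \<subseteq> young_diagram xs"
    "young_diagram xs - young_diagram ys =
       {(i,j). 1 \<le> i \<and> 1 \<le> j \<and> gx ys (i-1) < j \<and> j \<le> gx xs (i-1)}"
  using assms by (auto simp: yd_gx intro: order.trans)

lemma gx_update: "r < length xs \<Longrightarrow> gx (xs[r := v]) k = (if k = r then v else gx xs k)"
  by (auto simp: gx_def)

lemma sorted_gx:
  assumes "\<And>i j. i < j \<Longrightarrow> gx ys j \<le> gx ys i"
  shows "sorted_wrt (\<ge>) ys"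
  unfolding sorted_wrt_iff_nth_less
proof (intro allI impI)
  fix i j assume "i < j" "j < length ys"
  then show "ys ! j \<le> ys ! i" using assms[of i j] by (auto simp: gx_def)
qed

lemma terminal_stair:
  assumes p: "is_partition mu" and t: "\<not>(\<exists>nu. domino_removal mu nu)"
  shows "mu = stair (length mu)"
proof -
  define m where "m = length mu"
  define g where "g = gx mu"
  have mono: "g j \<le> g i" if "i \<le> j" for i j
  proof (cases "i = j")
    case False
    then have "i < j" using that by simp
    then show ?thesis using p unfolding is_partition_def sorted_wrt_iff_nth_less g_def gx_def
      by auto
  qed simp
  have pos: "0 < g i" if "i < m" for i
    using p that unfolding is_partition_def g_def gx_def m_def by auto
  have gm: "g i = 0" if "m \<le> i" for i
    using that unfolding g_def gx_def m_def by auto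
  have noH: "\<not>(\<exists>r<m. g (Suc r) + 2 \<le> g r)"
  proof
    assume "\<exists>r<m. g (Suc r) + 2 \<le> g r"
    then obtain r where r: "r < m" "g (Suc r) + 2 \<le> g r" by blast
    define ys where "ys = mu[r := g r - 2]"
    have gys: "gx ys k = (if k = r then g r - 2 else g k)" for k
      unfolding ys_def g_def using r(1) by (simp add: gx_update m_def)
    have sys: "sorted_wrt (\<ge>) ys"
    proof (rule sorted_gx)
      fix i j :: nat assume "i < j"
      then show "gx ys j \<le> gx ys i"
        using mono[of i j] mono[of "Suc r" j] mono[of i r] r unfolding gys by auto
    qed
    define nu where "nu = filter (\<lambda>x. 0 < x) ys"
    have le: "gx ys k \<le> gx mu k" for k unfolding gys g_def by simp
    have "young_diagram mu - young_diagram ys = {(Suc r, g r - 1), (Suc r, Suc (g r - 1))}"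
      unfolding yd_sub_diff(2)[OF le] gys g_def[symmetric]
    proof (intro equalityI subsetI)
      fix c assume c: "c \<in> {(i, j). 1 \<le> i \<and> 1 \<le> j \<and> (if i - 1 = r then g r - 2 else g (i - 1)) < j \<and> j \<le> g (i - 1)}"
      then obtain i j where ij: "c = (i,j)" "1 \<le> i" "1 \<le> j" "(if i - 1 = r then g r - 2 else g (i - 1)) < j" "j \<le> g (i - 1)" by blast
      then have "i - 1 = r" by (auto split: if_splits)
      then have "i = Suc r" using ij by auto
      then show "c \<in> {(Suc r, g r - 1), (Suc r, Suc (g r - 1))}" using ij r by auto
    next
      fix c assume "c \<in> {(Suc r, g r - 1), (Suc r, Suc (g r - 1))}"
      then show "c \<in> {(i, j). 1 \<le> i \<and> 1 \<le> j \<and> (if i - 1 = r then g r - 2 else g (i - 1)) < j \<and> j \<le> g (i - 1)}"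
        using r by auto
    qed
    then have "domino_removal mu nu"
      unfolding domino_removal_def nu_def yd_filter[OF sys]
      using part_filter[OF sys] yd_sub_diff(1)[OF le] unfolding is_domino_def by blast
    with t show False by blast
  qed
  have noV: "\<not>(\<exists>r<m. g r = g (Suc r))"
  proof
    assume ex: "\<exists>r<m. g r = g (Suc r)"
    define r where "r = Max {r. r < m \<and> g r = g (Suc r)}"
    have fin: "finite {r. r < m \<and> g r = g (Suc r)}" by simp
    have rin: "r < m \<and> g r = g (Suc r)" unfolding r_def using Max_in[OF fin] ex by blast
    have rmax: "\<not> (s < m \<and> g s = g (Suc s))" if "r < s" for s
      using Max_ge[OF fin, of s] that unfolding r_def[symmetric] by auto
    have r1: "Suc r < m"
    proof (rule ccontr)
      assume "\<not> Suc r < m"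
      then have "g (Suc r) = 0" using gm by simp
      then show False using rin pos[of r] by simp
    qed
    have r2: "g (Suc (Suc r)) < g (Suc r)"
      using rmax[of "Suc r"] r1 mono[of "Suc r" "Suc (Suc r)"] by auto
    define c where "c = g r"
    have c1: "1 \<le> c" using pos[of r] rin unfolding c_def by simp
    define ys where "ys = mu[r := c - 1, Suc r := c - 1]"
    have gys: "gx ys k = (if k = r \<or> k = Suc r then c - 1 else g k)" for k
      unfolding ys_def g_def using r1 by (simp add: gx_update m_def)
    have sys: "sorted_wrt (\<ge>) ys"
    proof (rule sorted_gx)
      fix i j :: nat assume ij: "i < j"
      show "gx ys j \<le> gx ys i"
      proof (cases "j = r \<or> j = Suc r")
        case True
        then show ?thesis using ij mono[of i r] rin unfolding gys c_def by auto
      next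
        case False
        then show ?thesis using ij mono[of i j] mono[of "Suc (Suc r)" j] r2 rin
          unfolding gys c_def by auto
      qed
    qed
    define nu where "nu = filter (\<lambda>x. 0 < x) ys"
    have le: "gx ys k \<le> gx mu k" for k unfolding gys g_def[symmetric] c_def using rin by auto
    have "young_diagram mu - young_diagram ys = {(Suc r, c), (Suc (Suc r), c)}"
      unfolding yd_sub_diff(2)[OF le] gys g_def[symmetric]
    proof (intro equalityI subsetI)
      fix x assume "x \<in> {(i, j). 1 \<le> i \<and> 1 \<le> j \<and> (if i - 1 = r \<or> i - 1 = Suc r then c - 1 else g (i - 1)) < j \<and> j \<le> g (i - 1)}"
      then obtain i j where ij: "x = (i,j)" "1 \<le> i" "1 \<le> j" "(if i - 1 = r \<or> i - 1 = Suc r then c - 1 else g (i - 1)) < j" "j \<le> g (i - 1)" by blast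
      then have "i - 1 = r \<or> i - 1 = Suc r" by (auto split: if_splits)
      then show "x \<in> {(Suc r, c), (Suc (Suc r), c)}" using ij rin c1 unfolding c_def
        by (auto split: if_splits)
    next
      fix x assume "x \<in> {(Suc r, c), (Suc (Suc r), c)}"
      then show "x \<in> {(i, j). 1 \<le> i \<and> 1 \<le> j \<and> (if i - 1 = r \<or> i - 1 = Suc r then c - 1 else g (i - 1)) < j \<and> j \<le> g (i - 1)}"
        using rin c1 unfolding c_def by auto
    qed
    then have "domino_removal mu nu"
      unfolding domino_removal_def nu_def yd_filter[OF sys]
      using part_filter[OF sys] yd_sub_diff(1)[OF le] unfolding is_domino_def by blast
    with t show False by blast
  qed
  have step: "g r = Suc (g (Suc r))" if "r < m" for r
    using noH noV mono[of r "Suc r"] that by force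
  have down: "g (m - d) = d" if "d \<le> m" for d
    using that
  proof (induction d)
    case 0 then show ?case using gm by simp
  next
    case (Suc d)
    then have "m - Suc d < m" "Suc (m - Suc d) = m - d" by auto
    then show ?case using step[of "m - Suc d"] Suc by simp
  qed
  show ?thesis
  proof (rule nth_equalityI)
    show "length mu = length (stair (length mu))" by simp
    fix i assume i: "i < length mu"
    have "mu ! i = g i" using i unfolding g_def gx_def by simp
    also have "\<dots> = m - i" using down[of "m - i"] i unfolding m_def by simp
    finally show "mu ! i = stair (length mu) ! i" using i unfolding m_def stair_def by simp
  qed
qed


lemma terminal_exists:
  "is_partition lam \<Longrightarrow> \<exists>kap. domino_removal\<^sup>*\<^sup>* lam kap \<and> \<not>(\<exists>nu. domino_removal kap nu)"
proof (induction "sum_list lam" arbitrary: lam rule: less_induct)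
  case less
  show ?case
  proof (cases "\<exists>nu. domino_removal lam nu")
    case True
    then obtain nu where nu: "domino_removal lam nu" by blast
    have "sum_list nu < sum_list lam" "is_partition nu" using domino_inv[OF nu] by auto
    then obtain kap where "domino_removal\<^sup>*\<^sup>* nu kap \<and> \<not>(\<exists>nu. domino_removal kap nu)"
      using less by blast
    then show ?thesis using nu by (meson converse_rtranclp_into_rtranclp)
  next
    case False then show ?thesis by blast
  qed
qed

lemma two_core_char:
  assumes "is_partition lam"
  shows "two_core lam = stair (nat (tk (sdv lam)))" "domino_removal\<^sup>*\<^sup>* lam (two_core lam)"
proof -
  define S where "S = stair (nat (tk (sdv lam)))"
  have uniq: "kap = S" if r: "domino_removal\<^sup>*\<^sup>* lam kap" and t: "\<not>(\<exists>nu. domino_removal kap nu)" for kap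
  proof -
    have i: "is_partition kap" "Dv kap = Dv lam" using reach_inv[OF r assms] by auto
    have ks: "kap = stair (length kap)" by (rule terminal_stair[OF i(1) t])
    have "hh (int (length kap)) = hh (int (nat (tk (sdv lam))))"
      using i(2) Dv_stair[of "length kap"] ks Dv_hh[of lam] hh_tk[of "sdv lam"] tk_nonneg[of "sdv lam"]
      by simp
    then have "length kap = nat (tk (sdv lam))" by (rule hh_inj)
    then show ?thesis using ks S_def by simp
  qed
  obtain kap where k: "domino_removal\<^sup>*\<^sup>* lam kap \<and> \<not>(\<exists>nu. domino_removal kap nu)"
    using terminal_exists[OF assms] by blast
  then have PS: "domino_removal\<^sup>*\<^sup>* lam S \<and> \<not>(\<exists>nu. domino_removal S nu)" using uniq by blast
  have "two_core lam = S" unfolding two_core_def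
    by (rule the_equality) (use PS uniq in blast)+
  then show "two_core lam = stair (nat (tk (sdv lam)))" "domino_removal\<^sup>*\<^sup>* lam (two_core lam)"
    using PS S_def by auto
qed

lemma core_size:
  assumes "is_partition lam"
  shows "2 * int (sum_list (two_core lam)) = sdv lam * (sdv lam + 1)"
    "sum_list (two_core lam) \<le> sum_list lam" "even (sum_list lam - sum_list (two_core lam))"
proof -
  have "2 * int (sum_list (two_core lam)) = int (2 * sum_list (stair (nat (tk (sdv lam)))))"
    using two_core_char(1)[OF assms] by simp
  also have "\<dots> = tk (sdv lam) * (tk (sdv lam) + 1)" unfolding sum_stair using tk_nonneg[of "sdv lam"]
    by (simp add: algebra_simps)
  finally show "2 * int (sum_list (two_core lam)) = sdv lam * (sdv lam + 1)" using tk_sq by simp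
  show "sum_list (two_core lam) \<le> sum_list lam" "even (sum_list lam - sum_list (two_core lam))"
    using reach_inv[OF two_core_char(2)[OF assms] assms] by auto
qed




definition dt :: "nat \<Rightarrow> (nat \<Rightarrow> nat \<Rightarrow> 'a::comm_ring_1) \<Rightarrow> 'a" where
  "dt n A = det (mat n n (\<lambda>(i,j). A i j))"

lemma dt_leib: "dt n A = (\<Sum>p\<in>{p. p permutes {0..<n}}. signof p * (\<Prod>i=0..<n. A i (p i)))"
proof -
  have "dt n A = (\<Sum>p\<in>{p. p permutes {0..<n}}. signof p * (\<Prod>i=0..<n. mat n n (\<lambda>(i,j). A i j) $$ (i, p i)))"
    unfolding dt_def using det_def'[of "mat n n (\<lambda>(i,j). A i j)" n] by simp
  also have "\<dots> = (\<Sum>p\<in>{p. p permutes {0..<n}}. signof p * (\<Prod>i=0..<n. A i (p i)))"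
  proof (rule sum.cong[OF refl])
    fix p assume "p \<in> {p. p permutes {0..<n}}"
    then have "p i < n" if "i < n" for i using permutes_in_image that by fastforce
    then show "signof p * (\<Prod>i=0..<n. mat n n (\<lambda>(i,j). A i j) $$ (i, p i)) = signof p * (\<Prod>i=0..<n. A i (p i))"
      by (auto intro!: prod.cong)
  qed
  finally show ?thesis .
qed

lemma dt_colwise: "dt n A = (\<Sum>p\<in>{p. p permutes {0..<n}}. signof p * (\<Prod>j=0..<n. A (p j) j))"
proof -
  have "dt n A = det (transpose_mat (mat n n (\<lambda>(i,j). A i j)))"
    unfolding dt_def by (rule det_transpose[symmetric, of _ n]) simp
  also have "transpose_mat (mat n n (\<lambda>(i,j). A i j)) = mat n n (\<lambda>(i,j). A j i)"
    by auto
  also have "det \<dots> = dt n (\<lambda>i j. A j i)" unfolding dt_def by simp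
  finally show ?thesis unfolding dt_leib .
qed

lemma dt_cong: "(\<And>i j. i < n \<Longrightarrow> j < n \<Longrightarrow> A i j = B i j) \<Longrightarrow> dt n A = dt n B"
  unfolding dt_def by (rule arg_cong[where f = det]) auto

lemma dt_0[simp]: "dt 0 A = 1"
  unfolding dt_def by simp

lemma dt_dup_col:
  assumes "j < n" "k < n" "j \<noteq> k" "\<And>i. i < n \<Longrightarrow> A i j = A i k"
  shows "dt n A = 0"
  unfolding dt_def
  by (rule det_identical_columns[of _ n j k]) (use assms in auto)

lemma dt_dup_row:
  assumes "j < n" "k < n" "j \<noteq> k" "\<And>i. i < n \<Longrightarrow> A j i = A k i"
  shows "dt n A = 0"
  unfolding dt_def
  by (rule det_identical_rows[of _ n j k]) (use assms in auto)

lemma prod_remove_if: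
  assumes "r \<in> S" "finite S"
  shows "(\<Prod>i\<in>S. if i = r then f i else g i) = f r * (\<Prod>i\<in>S - {r}. g i)"
  using assms by (simp add: prod.remove) 

lemma dt_row_lin2:
  assumes r: "r < n"
  shows "dt n (\<lambda>i j. if i = r then a * u j + b * v j else A i j)
     = a * dt n (\<lambda>i j. if i = r then u j else A i j) + b * dt n (\<lambda>i j. if i = r then v j else A i j)"
proof -
  have "(\<Prod>i=0..<n. (if i = r then a * u (p i) + b * v (p i) else A i (p i))) =
        a * (\<Prod>i=0..<n. (if i = r then u (p i) else A i (p i))) + b * (\<Prod>i=0..<n. (if i = r then v (p i) else A i (p i)))"
    for p :: "nat \<Rightarrow> nat"
  proof -
    have rr: "r \<in> {0..<n}" using r by simp
    show ?thesis
      unfolding prod_remove_if[OF rr finite_atLeastLessThan, where f = "\<lambda>i. a * u (p i) + b * v (p i)"]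
        prod_remove_if[OF rr finite_atLeastLessThan, where f = "\<lambda>i. u (p i)"]
        prod_remove_if[OF rr finite_atLeastLessThan, where f = "\<lambda>i. v (p i)"]
      by (simp add: algebra_simps)
  qed
  then show ?thesis unfolding dt_leib
    by (simp add: sum_distrib_left sum.distrib[symmetric] algebra_simps)
qed

lemma dt_row_addmult:
  assumes "r < n" "s < n" "r \<noteq> s"
  shows "dt n (\<lambda>i j. if i = r then A i j + a * A s j else A i j) = dt n A"
proof -
  have "dt n (\<lambda>i j. if i = r then A i j + a * A s j else A i j) =
        dt n (\<lambda>i j. if i = r then 1 * A r j + a * A s j else A i j)"
    by (rule dt_cong) auto
  also have "\<dots> = 1 * dt n (\<lambda>i j. if i = r then A r j else A i j) + a * dt n (\<lambda>i j. if i = r then A s j else A i j)"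
    by (rule dt_row_lin2[OF assms(1)])
  also have "dt n (\<lambda>i j. if i = r then A s j else A i j) = 0"
    by (rule dt_dup_row[of r n s]) (use assms in auto)
  also have "dt n (\<lambda>i j. if i = r then A r j else A i j) = dt n A"
    by (rule dt_cong) auto
  finally show ?thesis by simp
qed

lemma dt_col_scale:
  assumes j: "j < n"
  shows "dt n (\<lambda>i k. if k = j then c * A i k else A i k) = c * dt n A"
proof -
  have jj: "j \<in> {0..<n}" using j by simp
  have "(\<Prod>k=0..<n. (if k = j then c * A (p k) k else A (p k) k)) = c * (\<Prod>k=0..<n. A (p k) k)" for p :: "nat \<Rightarrow> nat"
    unfolding prod_remove_if[OF jj finite_atLeastLessThan, where f = "\<lambda>k. c * A (p k) k"]
      prod.remove[OF finite_atLeastLessThan jj] by simp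
  then show ?thesis unfolding dt_colwise by (simp add: sum_distrib_left algebra_simps)
qed

lemma dt_cols_scale: "dt n (\<lambda>i j. c j * A i j) = (\<Prod>j<n. c j) * dt n A"
  unfolding dt_colwise by (simp add: prod.distrib sum_distrib_left algebra_simps atLeast0LessThan)

lemma dt_swap:
  "(\<Sum>j<n. dt n (\<lambda>i k. if k = j then B i k else A i k)) = (\<Sum>r<n. dt n (\<lambda>i k. if i = r then B i k else A i k))"
proof -
  have *: "(\<Sum>j<n. \<Prod>i=0..<n. (if p i = j then B i (p i) else A i (p i))) =
           (\<Sum>r<n. \<Prod>i=0..<n. (if i = r then B i (p i) else A i (p i)))" if p: "p permutes {0..<n}" for p
  proof -
    have bij: "bij_betw p {..<n} {..<n}" using permutes_imp_bij[OF p] by (simp add: atLeast0LessThan)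
    have "(\<Sum>j<n. \<Prod>i=0..<n. (if p i = j then B i (p i) else A i (p i))) =
          (\<Sum>r<n. \<Prod>i=0..<n. (if p i = p r then B i (p i) else A i (p i)))"
      by (rule sum.reindex_bij_betw[OF bij, symmetric])
    also have "\<dots> = (\<Sum>r<n. \<Prod>i=0..<n. (if i = r then B i (p i) else A i (p i)))"
      using permutes_inj[OF p] by (intro sum.cong prod.cong) (auto simp: inj_eq)
    finally show ?thesis .
  qed
  let ?P = "{p. p permutes {0..<n}}"
  have "(\<Sum>j<n. dt n (\<lambda>i k. if k = j then B i k else A i k)) =
     (\<Sum>j<n. \<Sum>p\<in>?P. signof p * (\<Prod>i=0..<n. (if p i = j then B i (p i) else A i (p i))))"
    unfolding dt_leib by (rule refl)
  also have "\<dots> = (\<Sum>p\<in>?P. signof p * (\<Sum>j<n. \<Prod>i=0..<n. (if p i = j then B i (p i) else A i (p i))))"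
    by (subst sum.swap) (simp add: sum_distrib_left)
  also have "\<dots> = (\<Sum>p\<in>?P. signof p * (\<Sum>r<n. \<Prod>i=0..<n. (if i = r then B i (p i) else A i (p i))))"
    by (intro sum.cong refl) (simp add: *)
  also have "\<dots> = (\<Sum>r<n. \<Sum>p\<in>?P. signof p * (\<Prod>i=0..<n. (if i = r then B i (p i) else A i (p i))))"
    by (subst sum.swap) (simp add: sum_distrib_left)
  also have "\<dots> = (\<Sum>r<n. dt n (\<lambda>i k. if i = r then B i k else A i k))"
    unfolding dt_leib by (rule refl)
  finally show ?thesis .
qed


lemma dt_laplace0:
  assumes "B 0 0 = 1" "\<And>i. 1 \<le> i \<Longrightarrow> B i 0 = 0"
  shows "dt (Suc n) B = dt n (\<lambda>i j. B (Suc i) (Suc j))"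
proof -
  define M where "M = mat (Suc n) (Suc n) (\<lambda>(i,j). B i j)"
  have M: "M \<in> carrier_mat (Suc n) (Suc n)" unfolding M_def by simp
  have "dt (Suc n) B = det M" unfolding dt_def M_def by simp
  also have "\<dots> = (\<Sum>i<Suc n. M $$ (i,0) * cofactor M i 0)"
    by (rule laplace_expansion_column[OF M]) simp
  also have "\<dots> = cofactor M 0 0"
    by (subst sum.lessThan_Suc_shift) (use assms in \<open>simp add: M_def\<close>)
  also have "\<dots> = det (mat_delete M 0 0)" unfolding cofactor_def by simp
  also have "mat_delete M 0 0 = mat n n (\<lambda>(i,j). B (Suc i) (Suc j))"
    unfolding mat_delete_def M_def by (rule eq_matI) auto
  finally show ?thesis unfolding dt_def by simp
qed

lemma dt_rowops:
  assumes "1 \<le> k" "k \<le> N"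
  shows "dt N (\<lambda>i j. if k \<le> i then A i j - c i * A (i - 1) j else A i j) = dt N A"
  using assms(2,1)
proof (induction k rule: inc_induct)
  case base
  show ?case by (rule dt_cong) auto
next
  case (step n)
  define A' where "A' = (\<lambda>i j. if Suc n \<le> i then A i j - c i * A (i - 1) j else A i j)"
  have "dt N (\<lambda>i j. if n \<le> i then A i j - c i * A (i - 1) j else A i j)
      = dt N (\<lambda>i j. if i = n then A' i j + (- c n) * A' (n - 1) j else A' i j)"
    by (rule dt_cong) (use step in \<open>auto simp: A'_def\<close>)
  also have "\<dots> = dt N A'" by (rule dt_row_addmult) (use step in auto)
  also have "\<dots> = dt N A" unfolding A'_def using step by simp
  finally show ?case .
qed

definition ff :: "real \<Rightarrow> nat \<Rightarrow> real" where
  "ff x i = (\<Prod>t<i. (x - of_nat t))"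

lemma ff_0[simp]: "ff x 0 = 1" by (simp add: ff_def)
lemma ff_Suc: "ff x (Suc i) = ff x i * (x - of_nat i)" by (simp add: ff_def)

lemma vdm: "dt n (\<lambda>i j. ff (x j) i) = (\<Prod>j<n. \<Prod>i<j. (x j - x i))"
proof (induction n arbitrary: x)
  case 0 then show ?case by simp
next
  case (Suc n)
  define c where "c = (\<lambda>i::nat. x 0 - of_nat (i - 1))"
  have "dt (Suc n) (\<lambda>i j. ff (x j) i) =
     dt (Suc n) (\<lambda>i j. if 1 \<le> i then ff (x j) i - c i * ff (x j) (i - 1) else ff (x j) i)"
    by (rule dt_rowops[symmetric]) auto
  also have "\<dots> = dt (Suc n) (\<lambda>i j. if i = 0 then 1 else ff (x j) (i - 1) * (x j - x 0))"
  proof (rule dt_cong)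
    fix i j assume "i < Suc n" "j < Suc n"
    show "(if 1 \<le> i then ff (x j) i - c i * ff (x j) (i - 1) else ff (x j) i) =
          (if i = 0 then 1 else ff (x j) (i - 1) * (x j - x 0))"
    proof (cases i)
      case (Suc i') then show ?thesis by (simp add: ff_Suc c_def algebra_simps)
    qed simp
  qed
  also have "\<dots> = dt n (\<lambda>i j. ff (x (Suc j)) i * (x (Suc j) - x 0))"
    using dt_laplace0[of "\<lambda>i j. if i = 0 then 1 else ff (x j) (i - 1) * (x j - x 0)" n] by simp
  also have "\<dots> = (\<Prod>j<n. (x (Suc j) - x 0)) * dt n (\<lambda>i j. ff (x (Suc j)) i)"
    using dt_cols_scale[of n "\<lambda>j. x (Suc j) - x 0" "\<lambda>i j. ff (x (Suc j)) i"]
    by (simp add: mult.commute)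
  also have "dt n (\<lambda>i j. ff (x (Suc j)) i) = (\<Prod>j<n. \<Prod>i<j. (x (Suc j) - x (Suc i)))"
    using Suc.IH[of "\<lambda>j. x (Suc j)"] by simp
  also have "(\<Prod>j<n. (x (Suc j) - x 0)) * (\<Prod>j<n. \<Prod>i<j. (x (Suc j) - x (Suc i))) =
      (\<Prod>j<Suc n. \<Prod>i<j. (x j - x i))"
    by (simp add: prod.lessThan_Suc_shift prod.distrib del: prod.lessThan_Suc)
  finally show ?case .
qed


lemma ff_mul1: "x * ff x r = ff x (Suc r) + of_nat r * ff x r"
  by (simp add: ff_Suc algebra_simps)

lemma ff_mul2: "x * (x - 1) * ff x r = ff x (Suc (Suc r)) + 2 * of_nat r * ff x (Suc r) + of_nat r * (of_nat r - 1) * ff x r"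
  by (simp add: ff_Suc algebra_simps)

lemma sum_last_only:
  assumes "\<And>r. r < m \<Longrightarrow> f r = 0"
  shows "(\<Sum>r<Suc m. f r) = (f m :: real)"
  using assms by simp

lemma shift2_identity:
  fixes x :: "nat \<Rightarrow> real" and m :: nat
  defines "N \<equiv> Suc m"
  shows "(\<Sum>j<N. dt N (\<lambda>i k. if k = j then ff (x k) (Suc (Suc i)) else ff (x k) i)) =
    ((\<Sum>j<N. x j * (x j - 1)) - 2 * of_nat m * ((\<Sum>j<N. x j) - (\<Sum>i<N. of_nat i))
      - (\<Sum>i<N. of_nat i * (of_nat i - 1))) * dt N (\<lambda>i k. ff (x k) i)"
proof -
  define A where "A = (\<lambda>i k. ff (x k) i)"
  define T1 where "T1 = dt N (\<lambda>i k. if i = m then ff (x k) (Suc m) else A i k)"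
  define U where "U = (\<Sum>j<N. dt N (\<lambda>i k. if k = j then ff (x k) (Suc (Suc i)) else A i k))"
  have rowsame: "dt N (\<lambda>i k. if i = r then A r k else A i k) = dt N A" for r
    by (rule dt_cong) auto
  have colscale: "dt N (\<lambda>i k. if k = j then c k * A i k else A i k) = c j * dt N A" if "j < N" for j c
  proof -
    have "dt N (\<lambda>i k. if k = j then c k * A i k else A i k) = dt N (\<lambda>i k. if k = j then c j * A i k else A i k)"
      by (rule dt_cong) auto
    then show ?thesis using dt_col_scale[OF that] by simp
  qed
  have dup1: "dt N (\<lambda>i k. if i = r then ff (x k) (Suc r) else A i k) = 0" if "Suc r < N" for r
    by (rule dt_dup_row[of r N "Suc r"]) (use that in \<open>auto simp: A_def\<close>)
  have dup2: "dt N (\<lambda>i k. if i = r then ff (x k) (Suc (Suc r)) else A i k) = 0" if "Suc (Suc r) < N" for r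
    by (rule dt_dup_row[of r N "Suc (Suc r)"]) (use that in \<open>auto simp: A_def\<close>)
  have "(\<Sum>j<N. x j) * dt N A = (\<Sum>j<N. dt N (\<lambda>i k. if k = j then x k * A i k else A i k))"
    by (simp add: colscale sum_distrib_right)
  also have "\<dots> = (\<Sum>r<N. dt N (\<lambda>i k. if i = r then x k * A i k else A i k))"
    by (rule dt_swap)
  also have "\<dots> = (\<Sum>r<N. dt N (\<lambda>i k. if i = r then ff (x k) (Suc r) else A i k) + of_nat r * dt N A)"
  proof (rule sum.cong[OF refl])
    fix r assume r: "r \<in> {..<N}"
    have "dt N (\<lambda>i k. if i = r then x k * A i k else A i k) =
      dt N (\<lambda>i k. if i = r then 1 * ff (x k) (Suc r) + of_nat r * A r k else A i k)"
      by (rule dt_cong) (auto simp: A_def ff_mul1)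
    also have "\<dots> = 1 * dt N (\<lambda>i k. if i = r then ff (x k) (Suc r) else A i k) + of_nat r * dt N (\<lambda>i k. if i = r then A r k else A i k)"
      by (rule dt_row_lin2) (use r in auto)
    finally show "dt N (\<lambda>i k. if i = r then x k * A i k else A i k) =
        dt N (\<lambda>i k. if i = r then ff (x k) (Suc r) else A i k) + of_nat r * dt N A"
      using rowsame by simp
  qed
  also have "\<dots> = T1 + (\<Sum>r<N. of_nat r) * dt N A"
    unfolding sum.distrib T1_def N_def
    by (subst sum_last_only[of m]) (use dup1 N_def in \<open>auto simp: sum_distrib_right ring_distribs\<close>)
  finally have a: "T1 = ((\<Sum>j<N. x j) - (\<Sum>r<N. of_nat r)) * dt N A" by (simp add: algebra_simps)
  have "(\<Sum>j<N. x j * (x j - 1)) * dt N A = (\<Sum>j<N. dt N (\<lambda>i k. if k = j then (x k * (x k - 1)) * A i k else A i k))"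
    by (simp add: colscale sum_distrib_right)
  also have "\<dots> = (\<Sum>r<N. dt N (\<lambda>i k. if i = r then (x k * (x k - 1)) * A i k else A i k))"
    by (rule dt_swap)
  also have "\<dots> = (\<Sum>r<N. dt N (\<lambda>i k. if i = r then ff (x k) (Suc (Suc r)) else A i k)
      + 2 * of_nat r * dt N (\<lambda>i k. if i = r then ff (x k) (Suc r) else A i k)
      + of_nat r * (of_nat r - 1) * dt N A)"
  proof (rule sum.cong[OF refl])
    fix r assume r: "r \<in> {..<N}"
    have "dt N (\<lambda>i k. if i = r then (x k * (x k - 1)) * A i k else A i k) =
      dt N (\<lambda>i k. if i = r then 1 * ff (x k) (Suc (Suc r)) + 1 * (2 * of_nat r * ff (x k) (Suc r) + of_nat r * (of_nat r - 1) * A r k) else A i k)"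
      by (rule dt_cong) (auto simp: A_def ff_mul2)
    also have "\<dots> = 1 * dt N (\<lambda>i k. if i = r then ff (x k) (Suc (Suc r)) else A i k)
       + 1 * dt N (\<lambda>i k. if i = r then 2 * of_nat r * ff (x k) (Suc r) + of_nat r * (of_nat r - 1) * A r k else A i k)"
      by (rule dt_row_lin2) (use r in auto)
    also have "dt N (\<lambda>i k. if i = r then 2 * of_nat r * ff (x k) (Suc r) + of_nat r * (of_nat r - 1) * A r k else A i k)
      = 2 * of_nat r * dt N (\<lambda>i k. if i = r then ff (x k) (Suc r) else A i k) + of_nat r * (of_nat r - 1) * dt N (\<lambda>i k. if i = r then A r k else A i k)"
      by (rule dt_row_lin2) (use r in auto)
    finally show "dt N (\<lambda>i k. if i = r then (x k * (x k - 1)) * A i k else A i k) =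
       dt N (\<lambda>i k. if i = r then ff (x k) (Suc (Suc r)) else A i k)
      + 2 * of_nat r * dt N (\<lambda>i k. if i = r then ff (x k) (Suc r) else A i k)
      + of_nat r * (of_nat r - 1) * dt N A"
      using rowsame by simp
  qed
  also have "\<dots> = (\<Sum>r<N. dt N (\<lambda>i k. if i = r then ff (x k) (Suc (Suc r)) else A i k))
      + 2 * of_nat m * T1 + (\<Sum>r<N. of_nat r * (of_nat r - 1)) * dt N A"
  proof -
    have "(\<Sum>r<N. 2 * of_nat r * dt N (\<lambda>i k. if i = r then ff (x k) (Suc r) else A i k)) = 2 * of_nat m * T1"
      unfolding T1_def N_def
      by (subst sum_last_only[of m]) (use dup1 N_def in auto)
    then show ?thesis by (simp add: sum.distrib sum_distrib_right)
  qed
  also have "(\<Sum>r<N. dt N (\<lambda>i k. if i = r then ff (x k) (Suc (Suc r)) else A i k)) = U"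
  proof -
    have "(\<Sum>r<N. dt N (\<lambda>i k. if i = r then ff (x k) (Suc (Suc r)) else A i k)) =
       (\<Sum>r<N. dt N (\<lambda>i k. if i = r then ff (x k) (Suc (Suc i)) else A i k))"
      by (intro sum.cong refl dt_cong) auto
    then show ?thesis unfolding U_def using dt_swap[of N "\<lambda>i k. ff (x k) (Suc (Suc i))" A] by simp
  qed
  finally have b: "U = ((\<Sum>j<N. x j * (x j - 1)) - (\<Sum>r<N. of_nat r * (of_nat r - 1))) * dt N A - 2 * of_nat m * T1"
    by (simp add: algebra_simps)
  show ?thesis unfolding U_def[unfolded A_def, symmetric] A_def[symmetric] b a
    by (simp add: algebra_simps)
qed




lemma wronskian_dt: "wronskian fs = dt (length fs) (\<lambda>i j. (pderiv ^^ i) (fs ! j))"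
  unfolding wronskian_def dt_leib by (simp add: atLeast0LessThan)

lemma ff_nat_zero: "k < i \<Longrightarrow> ff (of_nat k) i = 0"
  unfolding ff_def by (rule prod_zero) auto

lemma pderiv_pow_monom: "(pderiv ^^ i) (monom c k) = monom (c * ff (of_nat k) i) (k - i)"
proof (induction i)
  case 0 then show ?case by simp
next
  case (Suc i)
  show ?case
  proof (cases "i \<le> k")
    case True
    then show ?thesis using Suc by (simp add: pderiv_monom ff_Suc of_nat_diff algebra_simps)
  next
    case False
    then show ?thesis using Suc by (simp add: pderiv_monom ff_nat_zero)
  qed
qed

lemma prod_monom: "finite S \<Longrightarrow> (\<Prod>j\<in>S. monom (a j) (e j)) = monom (\<Prod>j\<in>S. a j) (\<Sum>j\<in>S. e j)"
  by (induction S rule: finite_induct) (auto simp: mult_monom)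

definition Wm :: "nat \<Rightarrow> (nat \<Rightarrow> nat) \<Rightarrow> real poly" where
  "Wm l kap = monom (dt l (\<lambda>i j. ff (of_nat (kap j)) i)) ((\<Sum>j<l. kap j) - (\<Sum>i<l. i))"

lemma Wm_eq: "(\<Sum>p\<in>{p. p permutes {0..<l}}. signof p * (\<Prod>j<l. monom (ff (of_nat (kap j)) (p j)) (kap j - p j)))
   = Wm l kap"
proof -
  let ?P = "{p. p permutes {0..<l}}"
  let ?E = "(\<Sum>j<l. kap j) - (\<Sum>i<l. i)"
  have "signof p * (\<Prod>j<l. monom (ff (of_nat (kap j)) (p j)) (kap j - p j)) =
        monom (signof p * (\<Prod>j<l. ff (of_nat (kap j)) (p j))) ?E" if p: "p \<in> ?P" for p
  proof -
    have "signof p * (\<Prod>j<l. monom (ff (of_nat (kap j)) (p j)) (kap j - p j)) =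
          monom (signof p * (\<Prod>j<l. ff (of_nat (kap j)) (p j))) (\<Sum>j<l. kap j - p j)"
      by (simp add: prod_monom of_int_poly smult_monom flip: monom_0)
         (simp add: mult_monom)
    also have "\<dots> = monom (signof p * (\<Prod>j<l. ff (of_nat (kap j)) (p j))) ?E"
    proof (cases "(\<Prod>j<l. ff (of_nat (kap j)) (p j)) = 0")
      case False
      then have le: "p j \<le> kap j" if "j < l" for j
        using ff_nat_zero[of "kap j" "p j"] that by (metis lessThan_iff not_le prod_zero_iff finite_lessThan)
      have bij: "bij_betw p {..<l} {..<l}" using permutes_imp_bij[OF p[simplified]] by (simp add: atLeast0LessThan)
      have "(\<Sum>j<l. kap j - p j) = (\<Sum>j<l. kap j) - (\<Sum>j<l. p j)"
        by (rule sum_subtractf_nat) (use le in auto)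
      also have "(\<Sum>j<l. p j) = (\<Sum>i<l. i)" by (rule sum.reindex_bij_betw[OF bij])
      finally show ?thesis by simp
    next
      case True then show ?thesis unfolding True by simp
    qed
    finally show ?thesis .
  qed
  then have "(\<Sum>p\<in>?P. signof p * (\<Prod>j<l. monom (ff (of_nat (kap j)) (p j)) (kap j - p j))) =
     (\<Sum>p\<in>?P. monom (signof p * (\<Prod>j<l. ff (of_nat (kap j)) (p j))) ?E)"
    by (rule sum.cong[OF refl])
  also have "\<dots> = monom (\<Sum>p\<in>?P. signof p * (\<Prod>j<l. ff (of_nat (kap j)) (p j))) ?E"
    by (simp add: monom_sum)
  also have "(\<Sum>p\<in>?P. signof p * (\<Prod>j<l. ff (of_nat (kap j)) (p j))) = dt l (\<lambda>i j. ff (of_nat (kap j)) i)"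
    unfolding dt_colwise by (simp add: atLeast0LessThan)
  finally show ?thesis unfolding Wm_def .
qed


lemma smult_sum_right: "Polynomial.smult a (sum f S) = (\<Sum>x\<in>S. Polynomial.smult a (f x))"
  by (induction S rule: infinite_finite_induct) (auto simp: smult_add_right)

lemma wronskian_expand:
  assumes deg: "\<And>j. j < length fs \<Longrightarrow> degree (fs ! j) \<le> M"
  shows "wronskian fs = (\<Sum>kap\<in>PiE {..<length fs} (\<lambda>_. {..M}).
            Polynomial.smult (\<Prod>j<length fs. coeff (fs ! j) (kap j)) (Wm (length fs) kap))"
proof -
  define l where "l = length fs"
  let ?P = "{p. p permutes {0..<l}}"
  let ?K = "PiE {..<l} (\<lambda>_. {..M})"
  define C where "C = (\<lambda>kap. \<Prod>j<l. coeff (fs ! j) (kap j))"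
  define Q where "Q = (\<lambda>p kap. \<Prod>j<l. monom (ff (of_nat (kap j)) (p j)) (kap j - p j))"
  have dj: "(pderiv ^^ i) (fs ! j) = (\<Sum>k\<le>M. monom (coeff (fs ! j) k * ff (of_nat k) i) (k - i))"
    if "j < l" for i j
  proof -
    have "(pderiv ^^ i) (fs ! j) = (pderiv ^^ i) (\<Sum>k\<le>M. monom (coeff (fs ! j) k) k)"
      using poly_as_sum_of_monoms'[OF deg[of j]] that l_def by simp
    then show ?thesis by (simp add: higher_pderiv_sum pderiv_pow_monom)
  qed
  have inner: "(\<Prod>j=0..<l. (pderiv ^^ p j) (fs ! j)) = (\<Sum>kap\<in>?K. Polynomial.smult (C kap) (Q p kap))" for p
  proof -
    have "(\<Prod>j=0..<l. (pderiv ^^ p j) (fs ! j)) =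
          (\<Prod>j<l. \<Sum>k\<le>M. monom (coeff (fs ! j) k * ff (of_nat k) (p j)) (k - p j))"
      by (simp add: atLeast0LessThan dj)
    also have "\<dots> = (\<Sum>kap\<in>?K. \<Prod>j<l. monom (coeff (fs ! j) (kap j) * ff (of_nat (kap j)) (p j)) (kap j - p j))"
      by (rule prod_sum_PiE) auto
    also have "\<dots> = (\<Sum>kap\<in>?K. Polynomial.smult (C kap) (Q p kap))"
      unfolding C_def Q_def by (intro sum.cong refl) (simp add: prod_monom smult_monom prod.distrib)
    finally show ?thesis .
  qed
  have "wronskian fs = (\<Sum>p\<in>?P. signof p * (\<Prod>j=0..<l. (pderiv ^^ p j) (fs ! j)))"
    unfolding wronskian_dt dt_colwise l_def by simp
  also have "\<dots> = (\<Sum>p\<in>?P. \<Sum>kap\<in>?K. Polynomial.smult (C kap) (signof p * Q p kap))"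
    unfolding inner by (simp add: sum_distrib_left mult_smult_right)
  also have "\<dots> = (\<Sum>kap\<in>?K. Polynomial.smult (C kap) (\<Sum>p\<in>?P. signof p * Q p kap))"
    by (subst sum.swap) (simp add: smult_sum_right)
  also have "\<dots> = (\<Sum>kap\<in>?K. Polynomial.smult (C kap) (Wm l kap))"
    unfolding Q_def Wm_eq by simp
  finally show ?thesis unfolding C_def l_def .
qed

lemma coeff_Wm: "coeff (Wm l kap) m = (if m = (\<Sum>j<l. kap j) - (\<Sum>i<l. i) then dt l (\<lambda>i j. ff (of_nat (kap j)) i) else 0)"
  unfolding Wm_def by (simp add: coeff_monom)

lemma coeff_wronskian:
  assumes deg: "\<And>j. j < length fs \<Longrightarrow> degree (fs ! j) \<le> M"
  shows "coeff (wronskian fs) m = (\<Sum>kap\<in>PiE {..<length fs} (\<lambda>_. {..M}).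
            (\<Prod>j<length fs. coeff (fs ! j) (kap j)) *
            (if m = (\<Sum>j<length fs. kap j) - (\<Sum>i<length fs. i) then dt (length fs) (\<lambda>i j. ff (of_nat (kap j)) i) else 0))"
  by (simp add: wronskian_expand[OF deg] coeff_sum coeff_Wm)


lemma x_mult: "[:0, 1:] * p = pCons 0 (p :: real poly)"
  by (simp add: mult_pCons_left)

lemma hermite_coeff_zero: "n < k \<or> odd (n + k) \<Longrightarrow> coeff (hermite n) k = 0"
proof (induction n arbitrary: k rule: hermite.induct)
  case 1
  have "k \<noteq> 0"
  proof
    assume "k = 0" with 1 show False by simp
  qed
  then show ?case by simp
next
  case 2 then show ?case by (auto simp: coeff_pCons split: nat.splits)
next
  case (3 n)
  show ?case
  proof (cases k)
    case 0
    have "coeff (hermite n) 0 = 0"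
      by (rule 3) (use 3(3) 0 in simp)
    then show ?thesis using 0 by (simp add: x_mult)
  next
    case (Suc k')
    have a: "coeff (hermite (Suc n)) k' = 0"
      by (rule 3) (use 3(3) Suc in auto)
    have b: "coeff (hermite n) (Suc k') = 0"
      by (rule 3) (use 3(3) Suc in auto)
    show ?thesis using a b Suc by (simp add: x_mult)
  qed
qed
lemma degree_hermite: "degree (hermite n) \<le> n"
  by (rule degree_le) (simp add: hermite_coeff_zero)

lemma hermite_lead: "coeff (hermite n) n = 1"
proof (induction n rule: hermite.induct)
  case (3 n)
  have "coeff (hermite n) (Suc (Suc n)) = 0" by (rule hermite_coeff_zero) simp
  then show ?case using 3 by (simp add: x_mult)
qed simp_all

lemma hermite_sub: "coeff (hermite (Suc (Suc n))) n = - (real (Suc (Suc n)) * real (Suc n) / 2)"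
proof (induction n rule: less_induct)
  case (less n)
  show ?case
  proof (cases n)
    case 0 then show ?thesis by (simp add: x_mult)
  next
    case (Suc n')
    have "coeff (hermite (Suc (Suc n))) n = coeff (hermite (Suc n)) n' - real (Suc n) * coeff (hermite n) n"
      using Suc by (simp add: x_mult)
    also have "coeff (hermite n) n = 1" by (rule hermite_lead)
    also have "coeff (hermite (Suc n)) n' = - (real (Suc n) * real n / 2)"
    proof -
      have "n' < n" using Suc by simp
      then have "coeff (hermite (Suc (Suc n'))) n' = - (real (Suc (Suc n')) * real (Suc n') / 2)"
        by (rule less)
      then show ?thesis using Suc by (simp only:)
    qed
    finally show ?thesis by (simp add: field_simps)
  qed
qed




lemma sum_nat_set_ge: "finite T \<Longrightarrow> card T * (card T - 1) \<le> 2 * \<Sum>T"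
proof (induction "card T" arbitrary: T)
  case 0 then show ?case by simp
next
  case (Suc c)
  then have ne: "T \<noteq> {}" by auto
  define M where "M = Max T"
  have MT: "M \<in> T" using Max_in[OF Suc.prems ne] M_def by simp
  have "T \<subseteq> {0..M}" using Max_ge[OF Suc.prems] M_def by auto
  then have "card T \<le> Suc M" using card_mono[of "{0..M}" T] by simp
  then have Mc: "c \<le> M" using Suc.hyps(2) by simp
  have c': "card (T - {M}) = c" using Suc.hyps(2) MT Suc.prems by simp
  have IH: "c * (c - 1) \<le> 2 * \<Sum>(T - {M})" using Suc.hyps(1)[of "T - {M}"] c' Suc.prems by simp
  have "\<Sum>T = M + \<Sum>(T - {M})" using sum.remove[OF Suc.prems MT, of "\<lambda>x. x"] by simp
  then show ?case using IH Mc Suc.hyps(2)[symmetric]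
    by (cases c) (auto simp: algebra_simps)
qed

lemma sum_distinct_parity:
  fixes kap :: "nat \<Rightarrow> nat"
  assumes fin: "finite S" and inj: "inj_on kap S" and par: "\<And>j. j \<in> S \<Longrightarrow> kap j mod 2 = r"
  shows "card S * (card S - 1) + r * card S \<le> (\<Sum>j\<in>S. kap j)"
proof -
  define h where "h = (\<lambda>j. kap j div 2)"
  have kh: "kap j = 2 * h j + r" if "j \<in> S" for j using par[OF that] unfolding h_def by presburger
  have injh: "inj_on h S"
  proof (rule inj_onI)
    fix x y assume "x \<in> S" "y \<in> S" "h x = h y"
    then have "kap x = kap y" using kh by simp
    then show "x = y" using inj \<open>x \<in> S\<close> \<open>y \<in> S\<close> by (auto dest: inj_onD)
  qed
  have cT: "card (h ` S) = card S" using card_image[OF injh] .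
  have sT: "\<Sum>(h ` S) = (\<Sum>j\<in>S. h j)" using sum.reindex[OF injh, of "\<lambda>x. x"] by simp
  have "(\<Sum>j\<in>S. kap j) = (\<Sum>j\<in>S. 2 * h j + r)" using kh by (intro sum.cong) auto
  also have "\<dots> = 2 * (\<Sum>j\<in>S. h j) + r * card S" by (simp add: sum.distrib sum_distrib_left)
  finally show ?thesis using sum_nat_set_ge[of "h ` S"] fin cT sT by simp
qed


lemma degvec_nth: "i < length lam \<Longrightarrow> degvec lam ! i = lam ! i + length lam - Suc i"
  by (simp add: degvec_def)

lemma degvec_strict:
  assumes p: "is_partition lam" and ij: "i < j" "j < length lam"
  shows "degvec lam ! j < degvec lam ! i"
proof -
  have "lam ! j \<le> lam ! i" using p ij unfolding is_partition_def sorted_wrt_iff_nth_less by auto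
  then show ?thesis using ij by (simp add: degvec_nth)
qed

lemma sum_degvec: "sum_list (degvec lam) = sum_list lam + (\<Sum>i<length lam. i)"
proof (induction lam)
  case Nil then show ?case by (simp add: degvec_def)
next
  case (Cons x xs) then show ?case by (simp add: degvec_Cons)
qed

lemma sum_row_content: "2 * (\<Sum>j\<in>{1..x}. (int j - 1)) = int x * (int x - 1)"
  by (induction x) (auto simp: algebra_simps)

lemma content_Cons: "2 * content_sum (x # xs) = int x * (int x - 1) + 2 * content_sum xs - 2 * int (sum_list xs)"
proof -
  have e: "{(1::nat, j) | j. 1 \<le> j \<and> j \<le> x} = (\<lambda>j. (1, j)) ` {1..x}" by auto
  have d: "{(1::nat, j) | j. 1 \<le> j \<and> j \<le> x} \<inter> (\<lambda>(i, j). (Suc i, j)) ` young_diagram xs = {}"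
    by (auto simp: young_diagram_def)
  have i: "inj_on (\<lambda>(i, j). (Suc i, j)) (young_diagram xs)" by (auto simp: inj_on_def)
  let ?f = "\<lambda>(i::nat, j::nat). int j - int i"
  have "content_sum (x # xs) = (\<Sum>c\<in>{(1::nat, j) | j. 1 \<le> j \<and> j \<le> x}. ?f c)
     + (\<Sum>c\<in>(\<lambda>(i, j). (Suc i, j)) ` young_diagram xs. ?f c)"
    unfolding content_sum_def yd_Cons by (rule sum.union_disjoint) (use d e in auto)
  also have "(\<Sum>c\<in>{(1::nat, j) | j. 1 \<le> j \<and> j \<le> x}. ?f c) = (\<Sum>j\<in>{1..x}. (int j - 1))"
    unfolding e by (subst sum.reindex) (auto simp: inj_on_def)
  also have "(\<Sum>c\<in>(\<lambda>(i, j). (Suc i, j)) ` young_diagram xs. ?f c) = (\<Sum>c\<in>young_diagram xs. ?f c - 1)"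
    by (subst sum.reindex[OF i]) (auto intro!: sum.cong)
  also have "\<dots> = content_sum xs - int (sum_list xs)"
    unfolding content_sum_def by (simp add: sum_subtractf card_yd)
  finally show ?thesis using sum_row_content[of x] by simp
qed

lemma sum_lessThan_real: "2 * (\<Sum>i<L. real i) = real L * (real L - 1)"
  by (induction L) (auto simp: algebra_simps)

lemma content_formula:
  shows "2 * real_of_int (content_sum lam) =
    sum_list (map (\<lambda>v. real v * (real v - 1)) (degvec lam))
    - 2 * (real (length lam) - 1) * (sum_list (map real (degvec lam)) - (\<Sum>i<length lam. real i))
    - (\<Sum>i<length lam. real i * (real i - 1))"
proof (induction lam)
  case Nil then show ?case by (simp add: content_sum_def degvec_def)
next
  case (Cons x xs)
  define L where "L = length xs"
  have sd: "real (sum_list xs) = sum_list (map real (degvec xs)) - (\<Sum>i<L. real i)"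
  proof -
    have a: "real (sum_list (degvec xs)) = real (sum_list xs) + (\<Sum>i<L. real i)"
      using arg_cong[OF sum_degvec[of xs], of real] unfolding L_def by simp
    have e: "sum_list (map real (degvec xs)) = real (sum_list (degvec xs))" by (rule sum_list_of_nat)
    show ?thesis using a e by simp
  qed
  have c: "2 * real_of_int (content_sum (x # xs)) = real x * (real x - 1) + 2 * real_of_int (content_sum xs) - 2 * real (sum_list xs)"
    using arg_cong[OF content_Cons[of x xs], of real_of_int] by simp
  have SL: "(\<Sum>i<L. real i) = real L * (real L - 1) / 2" using sum_lessThan_real[of L] by simp
  show ?case
    unfolding c Cons.IH sd degvec_Cons
    apply (simp add: L_def[symmetric] SL algebra_simps)
    by (simp add: field_simps)
qed


lemma sum_degvec_nth: "(\<Sum>j<length lam. degvec lam ! j) = sum_list lam + (\<Sum>i<length lam. i)"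
  using sum_degvec[of lam] by (simp add: sum_list_sum_nth atLeast0LessThan)

lemma hermite_coeff_nz: assumes "coeff (hermite n) k \<noteq> 0" shows "k \<le> n \<and> even (n + k)"
proof -
  have "\<not> (n < k \<or> odd (n + k))" using assms hermite_coeff_zero[of n k] by blast
  then show ?thesis by (simp add: not_less)
qed

lemma nonzero_props:
  assumes "(\<Prod>j<l. coeff (hermite (nv ! j)) (kap j)) \<noteq> 0"
    and "dt l (\<lambda>i j. ff (real (kap j)) i) \<noteq> 0"
  shows "\<And>j. j < l \<Longrightarrow> kap j \<le> nv ! j \<and> even (nv ! j + kap j)" "inj_on kap {..<l}"
proof -
  fix j assume "j < l"
  then have "coeff (hermite (nv ! j)) (kap j) \<noteq> 0" using assms(1) by auto
  then show "kap j \<le> nv ! j \<and> even (nv ! j + kap j)" by (rule hermite_coeff_nz)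
next
  show "inj_on kap {..<l}"
  proof (rule inj_onI, rule ccontr)
    fix x y assume xy: "x \<in> {..<l}" "y \<in> {..<l}" "kap x = kap y" "x \<noteq> y"
    have "dt l (\<lambda>i j. ff (real (kap j)) i) = 0"
      by (rule dt_dup_col[of x l y]) (use xy in auto)
    then show False using assms(2) by simp
  qed
qed

lemma sdv_card: "sdv lam = int (card {j. j < length lam \<and> odd (degvec lam ! j)}) - int (card {j. j < length lam \<and> even (degvec lam ! j)})"
  unfolding sdv_def by (simp add: length_filter_conv_card)

lemma sum_lessThan_nat: "2 * (\<Sum>i<L. i) = L * (L - (1::nat))"
proof (induction L)
  case 0 show ?case by simp
next
  case (Suc L)
  have "2 * (\<Sum>i<Suc L. i) = 2 * (\<Sum>i<L. i) + 2 * L" by simp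
  also have "\<dots> = L * (L - 1) + 2 * L" using Suc by simp
  also have "\<dots> = Suc L * (Suc L - 1)" by (cases L) (auto simp: algebra_simps)
  finally show ?case .
qed

lemma int_mul_pred: "int (a * (a - 1)) = int a * (int a - 1)"
  by (cases a) (auto simp: algebra_simps)

lemma kap_bound:
  assumes p: "is_partition lam"
    and par: "\<And>j. j < length lam \<Longrightarrow> even (degvec lam ! j + kap j)"
    and inj: "inj_on kap {..<length lam}"
  shows "sum_list (two_core lam) + (\<Sum>i<length lam. i) \<le> (\<Sum>j<length lam. kap j)"
proof -
  define l where "l = length lam"
  define E where "E = {j. j < l \<and> even (degvec lam ! j)}"
  define Od where "Od = {j. j < l \<and> odd (degvec lam ! j)}"
  define a where "a = card E"
  define b where "b = card Od"
  have EO: "{..<l} = E \<union> Od" "E \<inter> Od = {}" unfolding E_def Od_def by auto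
  have fE: "finite E" "finite Od" unfolding E_def Od_def by auto
  have lab: "l = a + b" unfolding a_def b_def using card_Un_disjoint[OF fE EO(2)] EO(1) by (metis card_lessThan)
  have sE: "a * (a - 1) + 0 * a \<le> (\<Sum>j\<in>E. kap j)"
    unfolding a_def
    by (rule sum_distinct_parity[OF fE(1)]) (use inj par in \<open>auto simp: E_def l_def intro: inj_on_subset\<close>)
  have sO: "b * (b - 1) + 1 * b \<le> (\<Sum>j\<in>Od. kap j)"
    unfolding b_def
    by (rule sum_distinct_parity[OF fE(2)]) (use inj par in \<open>auto simp: Od_def l_def intro: inj_on_subset, presburger\<close>)
  have "(\<Sum>j<l. kap j) = (\<Sum>j\<in>E. kap j) + (\<Sum>j\<in>Od. kap j)"
    unfolding EO(1) by (rule sum.union_disjoint[OF fE EO(2)])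
  then have ge: "a * (a - 1) + b * b \<le> (\<Sum>j<l. kap j)" using sE sO
    by (cases b) auto
  have s: "sdv lam = int b - int a" unfolding sdv_card b_def a_def Od_def E_def l_def by simp
  have c: "2 * int (sum_list (two_core lam)) = sdv lam * (sdv lam + 1)" by (rule core_size(1)[OF p])
  have S: "2 * int (\<Sum>i<l. i) = int l * (int l - 1)"
    using sum_lessThan_nat[of l] int_mul_pred[of l] by linarith
  have "2 * (int (sum_list (two_core lam)) + int (\<Sum>i<l. i)) = 2 * (int a * (int a - 1) + int b * int b)"
    using c S unfolding s lab by (simp add: algebra_simps)
  then have h: "int (sum_list (two_core lam)) + int (\<Sum>i<l. i) = int a * (int a - 1) + int b * int b"
    by (metis mult_cancel_left zero_neq_numeral)
  have h2: "int (a * (a - 1) + b * b) = int a * (int a - 1) + int b * int b"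
    by (metis int_mul_pred of_nat_add of_nat_mult)
  have "int (sum_list (two_core lam) + (\<Sum>i<l. i)) = int (a * (a - 1) + b * b)"
    using h h2 by (simp only: of_nat_add)
  then show ?thesis using ge unfolding l_def by linarith
qed


definition Wl :: "nat list \<Rightarrow> real poly" where
  "Wl lam = wronskian (map hermite (degvec lam))"

lemma coeff_Wl:
  "coeff (Wl lam) m = (\<Sum>kap\<in>PiE {..<length lam} (\<lambda>_. {..sum_list (degvec lam)}).
      (\<Prod>j<length lam. coeff (hermite (degvec lam ! j)) (kap j)) *
      (if m = (\<Sum>j<length lam. kap j) - (\<Sum>i<length lam. i) then dt (length lam) (\<lambda>i j. ff (of_nat (kap j)) i) else 0))"
proof -
  have "coeff (Wl lam) m = (\<Sum>kap\<in>PiE {..<length (map hermite (degvec lam))} (\<lambda>_. {..sum_list (degvec lam)}).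
      (\<Prod>j<length (map hermite (degvec lam)). coeff (map hermite (degvec lam) ! j) (kap j)) *
      (if m = (\<Sum>j<length (map hermite (degvec lam)). kap j) - (\<Sum>i<length (map hermite (degvec lam)). i)
       then dt (length (map hermite (degvec lam))) (\<lambda>i j. ff (of_nat (kap j)) i) else 0))"
    unfolding Wl_def
  proof (rule coeff_wronskian)
    fix j assume "j < length (map hermite (degvec lam))"
    then have "degree (hermite (degvec lam ! j)) \<le> degvec lam ! j" "degvec lam ! j \<le> sum_list (degvec lam)"
      using degree_hermite elem_le_sum_list[of j "degvec lam"] by auto
    then show "degree (map hermite (degvec lam) ! j) \<le> sum_list (degvec lam)"
      using \<open>j < _\<close> by auto
  qed
  also have "\<dots> = (\<Sum>kap\<in>PiE {..<length lam} (\<lambda>_. {..sum_list (degvec lam)}).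
      (\<Prod>j<length lam. coeff (hermite (degvec lam ! j)) (kap j)) *
      (if m = (\<Sum>j<length lam. kap j) - (\<Sum>i<length lam. i) then dt (length lam) (\<lambda>i j. ff (of_nat (kap j)) i) else 0))"
    by (intro sum.cong refl arg_cong2[where f = "(*)"] prod.cong) auto
  finally show ?thesis .
qed

lemma arith_aux: "(c::nat) + S \<le> K \<Longrightarrow> K \<le> Nn \<Longrightarrow> Nn = L + S \<Longrightarrow> even (K + Nn) \<Longrightarrow> m = K - S
  \<Longrightarrow> c \<le> m \<and> m \<le> L \<and> even (m + L)"
  by presburger

lemma P1:
  assumes p: "is_partition lam" and nz: "coeff (Wl lam) m \<noteq> 0"
  shows "sum_list (two_core lam) \<le> m \<and> m \<le> sum_list lam \<and> even (m + sum_list lam)"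
proof -
  define l where "l = length lam"
  define nv where "nv = degvec lam"
  define S where "S = (\<Sum>i<l. i)"
  obtain kap where kin: "kap \<in> PiE {..<l} (\<lambda>_. {..sum_list nv})" and
    tnz: "(\<Prod>j<l. coeff (hermite (nv ! j)) (kap j)) *
      (if m = (\<Sum>j<l. kap j) - S then dt l (\<lambda>i j. ff (of_nat (kap j)) i) else 0) \<noteq> 0"
    using nz unfolding coeff_Wl l_def[symmetric] nv_def[symmetric] S_def[symmetric]
    by (meson sum.not_neutral_contains_not_neutral)
  have pnz: "(\<Prod>j<l. coeff (hermite (nv ! j)) (kap j)) \<noteq> 0" using tnz by auto
  have mS: "m = (\<Sum>j<l. kap j) - S" using tnz by (auto split: if_splits)
  have dnz: "dt l (\<lambda>i j. ff (real (kap j)) i) \<noteq> 0" using tnz by (auto split: if_splits)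
  have props: "\<And>j. j < l \<Longrightarrow> kap j \<le> nv ! j \<and> even (nv ! j + kap j)" "inj_on kap {..<l}"
    using nonzero_props[OF pnz dnz] by auto
  have lb: "sum_list (two_core lam) + S \<le> (\<Sum>j<l. kap j)"
    unfolding S_def l_def by (rule kap_bound[OF p]) (use props in \<open>auto simp: l_def nv_def\<close>)
  have ub: "(\<Sum>j<l. kap j) \<le> (\<Sum>j<l. nv ! j)" using props(1) by (intro sum_mono) auto
  have sn: "(\<Sum>j<l. nv ! j) = sum_list lam + S" unfolding nv_def l_def S_def by (rule sum_degvec_nth)
  have ev: "even ((\<Sum>j<l. kap j) + (\<Sum>j<l. nv ! j))"
    unfolding sum.distrib[symmetric] by (rule dvd_sum) (use props(1) in \<open>auto simp: add.commute\<close>)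
  show ?thesis using arith_aux[OF lb ub sn ev mS] .
qed


lemma ff_shift: "ff x (Suc i) = x * ff (x - 1) i"
  by (induction i) (auto simp: ff_Suc algebra_simps)

lemma ff_shift2: "ff x (Suc (Suc i)) = x * (x - 1) * ff (x - 2) i"
  using ff_shift[of x "Suc i"] ff_shift[of "x - 1" i] by (simp add: algebra_simps)

lemma vandermonde_real:
  "real_of_int (vandermonde_deg lam) = (\<Prod>j<length lam. \<Prod>i<j. (real (degvec lam ! j) - real (degvec lam ! i)))"
  unfolding vandermonde_deg_def Let_def by (simp add: of_int_prod)

lemma sum_list_map_nth: "sum_list (map f xs) = (\<Sum>j<length xs. f (xs ! j))"
  by (simp add: sum_list_sum_nth atLeast0LessThan)

lemma even_diff_aux: "(b::nat) \<le> a \<Longrightarrow> even (a + b) \<Longrightarrow> even (a - b)"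
  by presburger

lemma two_aux: "even (d::nat) \<Longrightarrow> d \<noteq> 0 \<Longrightarrow> d + r = 2 \<Longrightarrow> d = 2"
  by presburger

lemma P2:
  assumes p: "is_partition lam" and N2: "2 \<le> sum_list lam"
  shows "coeff (Wl lam) (sum_list lam - 2) = - real_of_int (content_sum lam) * real_of_int (vandermonde_deg lam)"
proof -
  define l where "l = length lam"
  define nv where "nv = degvec lam"
  define S where "S = (\<Sum>i<l. i)"
  define M where "M = sum_list nv"
  define N where "N = sum_list lam"
  define m where "m = N - 2"
  define T where "T = (\<lambda>kap. (\<Prod>j<l. coeff (hermite (nv ! j)) (kap j)) *
      (if m = (\<Sum>j<l. kap j) - S then dt l (\<lambda>i j. ff (of_nat (kap j)) i) else 0))"
  define J where "J = {j. j < l \<and> 2 \<le> nv ! j}"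
  define phi where "phi = (\<lambda>j k. if k < l then (if k = j then nv ! k - 2 else nv ! k) else undefined)"
  define PI where "PI = PiE {..<l} (\<lambda>_. {..M})"
  have sn: "(\<Sum>j<l. nv ! j) = N + S" unfolding nv_def l_def S_def N_def by (rule sum_degvec_nth)
  have nvM: "nv ! k \<le> M" if "k < l" for k
    using elem_le_sum_list[of k nv] that unfolding M_def nv_def l_def by simp
  have cW: "coeff (Wl lam) m = sum T PI"
    unfolding coeff_Wl T_def PI_def l_def nv_def S_def M_def ..
  have sub: "phi ` J \<subseteq> PI"
  proof
    fix f assume "f \<in> phi ` J"
    then obtain j where j: "j \<in> J" "f = phi j" by auto
    show "f \<in> PI" unfolding PI_def PiE_iff extensional_def mem_Collect_eq
    proof (intro conjI ballI allI impI)
      fix k assume "k \<in> {..<l}" then show "f k \<in> {..M}" using nvM[of k] j unfolding phi_def by auto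
    next
      fix k assume "k \<notin> {..<l}" then show "f k = undefined" using j unfolding phi_def by auto
    qed
  qed
  have zero: "T kap = 0" if kin: "kap \<in> PI - phi ` J" for kap
  proof (rule ccontr)
    assume tnz: "T kap \<noteq> 0"
    have pnz: "(\<Prod>j<l. coeff (hermite (nv ! j)) (kap j)) \<noteq> 0" using tnz unfolding T_def by auto
    have mS: "m = (\<Sum>j<l. kap j) - S" using tnz unfolding T_def by (auto split: if_splits)
    have dnz: "dt l (\<lambda>i j. ff (real (kap j)) i) \<noteq> 0" using tnz unfolding T_def by (auto split: if_splits)
    have props: "\<And>j. j < l \<Longrightarrow> kap j \<le> nv ! j \<and> even (nv ! j + kap j)" "inj_on kap {..<l}"
      using nonzero_props[OF pnz dnz] by auto
    have lb: "sum_list (two_core lam) + S \<le> (\<Sum>j<l. kap j)"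
      unfolding S_def l_def by (rule kap_bound[OF p]) (use props in \<open>auto simp: l_def nv_def\<close>)
    have sk: "(\<Sum>j<l. kap j) + 2 = (\<Sum>j<l. nv ! j)" using lb mS sn N2 unfolding m_def N_def by linarith
    define D where "D = (\<lambda>k. nv ! k - kap k)"
    have sD: "(\<Sum>k<l. D k) = 2"
    proof -
      have "(\<Sum>k<l. D k) = (\<Sum>k<l. nv ! k) - (\<Sum>k<l. kap k)"
        unfolding D_def by (rule sum_subtractf_nat) (use props in auto)
      then show ?thesis using sk by simp
    qed
    have "\<exists>k\<in>{..<l}. D k \<noteq> 0"
    proof (rule ccontr)
      assume "\<not> (\<exists>k\<in>{..<l}. D k \<noteq> 0)"
      then have "(\<Sum>k<l. D k) = 0" by simp
      with sD show False by simp
    qed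
    then obtain j where j: "j < l" "D j \<noteq> 0" by auto
    have evD: "even (D j)" using props(1)[OF j(1)] unfolding D_def
      by (intro even_diff_aux) auto
    have jin: "j \<in> {..<l}" using j by simp
    have split: "(\<Sum>k<l. D k) = D j + (\<Sum>k\<in>{..<l} - {j}. D k)"
      using sum.remove[OF finite_lessThan jin] by simp
    have Dj: "D j = 2" by (rule two_aux[OF evD j(2)]) (use split sD in simp)
    have others: "\<forall>k\<in>{..<l} - {j}. D k = 0" using split sD Dj by simp
    have "kap = phi j"
    proof
      fix k show "kap k = phi j k"
      proof (cases "k < l")
        case True
        show ?thesis
        proof (cases "k = j")
          case True
          then show ?thesis using Dj props(1)[OF \<open>k < l\<close>] \<open>k < l\<close> unfolding phi_def D_def by auto
        next
          case False
          then have "D k = 0" using others \<open>k < l\<close> by auto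
          then show ?thesis using False props(1)[OF \<open>k < l\<close>] \<open>k < l\<close> unfolding phi_def D_def by auto
        qed
      next
        case False
        then show ?thesis using kin unfolding PI_def phi_def by (auto simp: PiE_def extensional_def)
      qed
    qed
    moreover have "j \<in> J" using Dj j unfolding J_def D_def by auto
    ultimately show False using kin by auto
  qed
  have "sum T PI = sum T (phi ` J)"
    by (rule sum.mono_neutral_right) (use sub zero in \<open>auto simp: PI_def intro!: finite_PiE\<close>)
  also have injphi: "inj_on phi J"
  proof (rule inj_onI, rule ccontr)
    fix a b assume ab: "a \<in> J" "b \<in> J" "phi a = phi b" "a \<noteq> b"
    then have "phi a a = phi b a" by simp
    then show False using ab unfolding phi_def J_def by auto
  qed
  then have "sum T (phi ` J) = (\<Sum>j\<in>J. T (phi j))" by (rule sum.reindex[unfolded comp_def])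
  finally have cW2: "coeff (Wl lam) m = (\<Sum>j\<in>J. T (phi j))" using cW by simp
  define x where "x = (\<lambda>k. real (nv ! k))"
  define A where "A = (\<lambda>i k. ff (x k) i)"
  define Bj where "Bj = (\<lambda>j. dt l (\<lambda>i k. if k = j then ff (x k) (Suc (Suc i)) else A i k))"
  have Tphi: "T (phi j) = - (1/2) * Bj j" if jJ: "j \<in> J" for j
  proof -
    have jl: "j < l" and j2: "2 \<le> nv ! j" using jJ unfolding J_def by auto
    have jin: "j \<in> {..<l}" using jl by simp
    have pr: "(\<Prod>k<l. coeff (hermite (nv ! k)) (phi j k)) = - (x j * (x j - 1) / 2)"
    proof -
      have "(\<Prod>k<l. coeff (hermite (nv ! k)) (phi j k)) =
          coeff (hermite (nv ! j)) (nv ! j - 2) * (\<Prod>k\<in>{..<l} - {j}. coeff (hermite (nv ! k)) (nv ! k))"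
      proof -
        have "(\<Prod>k<l. coeff (hermite (nv ! k)) (phi j k)) = coeff (hermite (nv ! j)) (phi j j) *
            (\<Prod>k\<in>{..<l} - {j}. coeff (hermite (nv ! k)) (phi j k))"
          by (rule prod.remove[OF finite_lessThan jin])
        also have "(\<Prod>k\<in>{..<l} - {j}. coeff (hermite (nv ! k)) (phi j k)) =
            (\<Prod>k\<in>{..<l} - {j}. coeff (hermite (nv ! k)) (nv ! k))"
          by (intro prod.cong) (auto simp: phi_def)
        finally show ?thesis using jl by (simp add: phi_def)
      qed
      also have "(\<Prod>k\<in>{..<l} - {j}. coeff (hermite (nv ! k)) (nv ! k)) = 1"
        by (simp add: hermite_lead)
      also obtain t where t: "nv ! j = Suc (Suc t)" using j2 by (metis add_2_eq_Suc le_Suc_ex)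
      have "coeff (hermite (nv ! j)) (nv ! j - 2) = - (x j * (x j - 1) / 2)"
        unfolding x_def t using hermite_sub[of t] by (simp add: algebra_simps)
      finally show ?thesis by simp
    qed
    have sphi: "(\<Sum>k<l. phi j k) + 2 = (\<Sum>k<l. nv ! k)"
    proof -
      have "(\<Sum>k<l. phi j k) = phi j j + (\<Sum>k\<in>{..<l} - {j}. phi j k)"
        using sum.remove[OF finite_lessThan jin] by simp
      also have "(\<Sum>k\<in>{..<l} - {j}. phi j k) = (\<Sum>k\<in>{..<l} - {j}. nv ! k)"
        unfolding phi_def by (intro sum.cong) auto
      finally show ?thesis using sum.remove[OF finite_lessThan jin, of "\<lambda>k. nv ! k"] j2 jl
        unfolding phi_def by simp
    qed
    have cond: "m = (\<Sum>k<l. phi j k) - S" using sphi sn N2 unfolding m_def N_def by linarith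
    have dcol: "x j * (x j - 1) * dt l (\<lambda>i k. ff (of_nat (phi j k)) i) = Bj j"
    proof -
      have "Bj j = dt l (\<lambda>i k. if k = j then (x j * (x j - 1)) * ff (of_nat (phi j k)) i else ff (of_nat (phi j k)) i)"
        unfolding Bj_def A_def
      proof (rule dt_cong)
        fix i k assume "i < l" "k < l"
        show "(if k = j then ff (x k) (Suc (Suc i)) else ff (x k) i) =
          (if k = j then x j * (x j - 1) * ff (real (phi j k)) i else ff (real (phi j k)) i)"
          using \<open>k < l\<close> j2 unfolding phi_def x_def by (auto simp: ff_shift2 of_nat_diff)
      qed
      also have "\<dots> = x j * (x j - 1) * dt l (\<lambda>i k. ff (of_nat (phi j k)) i)"
        by (rule dt_col_scale[OF jl])
      finally show ?thesis by simp
    qed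
    show ?thesis unfolding T_def using pr cond dcol by (simp add: algebra_simps)
  qed
  have Bzero: "Bj j = 0" if "j < l" "j \<notin> J" for j
  proof -
    have nj: "nv ! j < 2" using that unfolding J_def by auto
    have "Bj j = dt l (\<lambda>i k. if k = j then 0 * A i k else A i k)"
      unfolding Bj_def
      by (rule dt_cong) (use nj in \<open>auto simp: x_def ff_nat_zero\<close>)
    also have "\<dots> = 0" by (simp add: dt_col_scale[OF that(1)])
    finally show ?thesis .
  qed
  have "(\<Sum>j\<in>J. T (phi j)) = - (1/2) * (\<Sum>j\<in>J. Bj j)"
    by (simp add: Tphi sum_distrib_left)
  also have "(\<Sum>j\<in>J. Bj j) = (\<Sum>j<l. Bj j)"
    by (rule sum.mono_neutral_left) (use Bzero in \<open>auto simp: J_def\<close>)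
  finally have cW3: "coeff (Wl lam) m = - (1/2) * (\<Sum>j<l. Bj j)" using cW2 by simp
  obtain m' where lm: "l = Suc m'" using N2 unfolding l_def by (cases lam) auto
  have "(\<Sum>j<l. Bj j) = ((\<Sum>j<l. x j * (x j - 1)) - 2 * of_nat m' * ((\<Sum>j<l. x j) - (\<Sum>i<l. of_nat i))
      - (\<Sum>i<l. of_nat i * (of_nat i - 1))) * dt l A"
    unfolding Bj_def A_def lm by (rule shift2_identity)
  also have "(\<Sum>j<l. x j * (x j - 1)) - 2 * of_nat m' * ((\<Sum>j<l. x j) - (\<Sum>i<l. of_nat i))
      - (\<Sum>i<l. of_nat i * (of_nat i - 1)) = 2 * real_of_int (content_sum lam)"
  proof -
    have cf: "2 * real_of_int (content_sum lam) = (\<Sum>j<l. x j * (x j - 1)) - 2 * (real l - 1) * ((\<Sum>j<l. x j) - (\<Sum>i<l. real i)) - (\<Sum>i<l. real i * (real i - 1))"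
      using content_formula[of lam] unfolding sum_list_map_nth x_def nv_def l_def by simp
    have rl: "real l - 1 = real m'" using lm by simp
    show ?thesis using cf by (simp add: rl)
  qed
  also have "dt l A = real_of_int (vandermonde_deg lam)"
    unfolding A_def x_def vandermonde_real vdm nv_def l_def ..
  finally show ?thesis using cW3 unfolding m_def N_def by simp
qed


lemma coeff_pcomp_sq: "coeff (pcompose R [:0, 0, 1:]) t = (if even t then coeff R (t div 2) else (0::real))"
proof (induction R arbitrary: t rule: pCons_induct)
  case 0 then show ?case by simp
next
  case (pCons a R)
  have e: "pcompose (pCons a R) [:0, 0, 1:] = pCons a (pCons 0 (pcompose R [:0, 0, 1:]))"
    by (simp add: pcompose_pCons mult_pCons_left)
  show ?case
  proof (cases t)
    case 0 then show ?thesis unfolding e by simp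
  next
    case (Suc t1)
    show ?thesis
    proof (cases t1)
      case 0 then show ?thesis unfolding e using Suc by simp
    next
      case (Suc t2)
      have "coeff (pCons a R) (Suc (Suc t2) div 2) = coeff R (t2 div 2)" by simp
      then show ?thesis unfolding e using pCons.IH[of t2] \<open>t = Suc t1\<close> Suc by simp
    qed
  qed
qed

lemma vandermonde_nz:
  assumes p: "is_partition lam"
  shows "vandermonde_deg lam \<noteq> 0"
proof -
  have "int (degvec lam ! j) - int (degvec lam ! i) \<noteq> 0" if "i < j" "j < length lam" for i j
    using degvec_strict[OF p that] by simp
  then show ?thesis unfolding vandermonde_deg_def Let_def
    by (auto simp: prod_zero_iff)
qed

lemma odd_aux: "\<not> t < (c0::nat) \<Longrightarrow> N = c0 + 2 * d \<Longrightarrow> even (t + N) \<Longrightarrow> even (t - c0)"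
  by presburger

theorem proposition4p16:
  fixes lam :: "nat list"
  assumes "is_partition lam"
    and "quot_size lam > 0"
  shows "coeff (R_poly lam) (quot_size lam - 1) = - of_int (content_sum lam)"
proof -
  note p = assms(1)
  define c0 where "c0 = sum_list (two_core lam)"
  define N where "N = sum_list lam"
  define d where "d = quot_size lam"
  define He where "He = hermite_partition lam"
  define Dl where "Dl = real_of_int (vandermonde_deg lam)"
  have cN: "c0 \<le> N" "even (N - c0)" using core_size[OF p] unfolding c0_def N_def by auto
  have dd: "N = c0 + 2 * d" "0 < d" using cN assms(2) unfolding d_def quot_size_def c0_def N_def by auto
  have Dnz: "Dl \<noteq> 0" unfolding Dl_def using vandermonde_nz[OF p] by simp
  have cHe: "coeff He t = coeff (Wl lam) t / Dl" for t
    unfolding He_def hermite_partition_def Wl_def Dl_def by simp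
  have Hnz: "c0 \<le> t \<and> t \<le> N \<and> even (t + N)" if "coeff He t \<noteq> 0" for t
    using P1[OF p, of t] that unfolding cHe c0_def N_def by auto
  define R where "R = (\<Sum>i\<le>d. monom (coeff He (c0 + 2 * i)) i)"
  have cR: "coeff R i = coeff He (c0 + 2 * i)" for i
  proof (cases "i \<le> d")
    case True then show ?thesis unfolding R_def by (simp add: coeff_sum coeff_monom)
  next
    case False
    then have "coeff He (c0 + 2 * i) = 0" using Hnz[of "c0 + 2 * i"] dd by auto
    then show ?thesis using False unfolding R_def by (simp add: coeff_sum coeff_monom)
  qed
  have eqR: "He = monom 1 c0 * pcompose R [:0, 0, 1:]"
  proof (rule poly_eqI)
    fix t
    show "coeff He t = coeff (monom 1 c0 * pcompose R [:0, 0, 1:]) t"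
    proof (cases "t < c0")
      case True
      then have "coeff He t = 0" using Hnz[of t] by auto
      then show ?thesis using True by (simp add: coeff_monom_mult)
    next
      case False
      show ?thesis
      proof (cases "even (t - c0)")
        case True
        have "c0 + 2 * ((t - c0) div 2) = t" using True False by auto
        then show ?thesis using False True by (simp add: coeff_monom_mult coeff_pcomp_sq cR)
      next
        case odd: False
        have "coeff He t = 0"
        proof (rule ccontr)
          assume "coeff He t \<noteq> 0"
          then have "even (t + N)" using Hnz by auto
          then show False using odd_aux[of t c0 N d] odd False dd by blast
        qed
        then show ?thesis using False odd by (simp add: coeff_monom_mult coeff_pcomp_sq)
      qed
    qed
  qed
  have uniq: "R' = R" if "He = monom 1 c0 * pcompose R' [:0, 0, 1:]" for R'
  proof (rule poly_eqI)
    fix i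
    have "coeff He (c0 + 2 * i) = coeff R' i"
      unfolding that by (simp add: coeff_monom_mult coeff_pcomp_sq)
    then show "coeff R' i = coeff R i" using cR by simp
  qed
  have RP: "R_poly lam = R"
    unfolding R_poly_def He_def[symmetric] c0_def[symmetric]
    apply (rule the_equality)
     apply (rule eqR)
    apply (erule uniq)
    done
  have "coeff (R_poly lam) (d - 1) = coeff He (N - 2)"
  proof -
    have "c0 + 2 * (d - 1) = N - 2" using dd by (cases d) auto
    then show ?thesis unfolding RP cR by simp
  qed
  also have "\<dots> = - real_of_int (content_sum lam)"
  proof -
    have N2: "2 \<le> sum_list lam" using dd N_def by simp
    have "coeff (Wl lam) (N - 2) = - real_of_int (content_sum lam) * Dl"
      using P2[OF p N2] unfolding N_def Dl_def .
    then show ?thesis by (simp add: cHe Dnz)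
  qed
  finally show ?thesis unfolding d_def by simp
qed


end
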